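(* Let $\overline{SB}$ be the output of Algorithm 1 on $\widetilde G$ and $M$, and let $SB^\ast$ be a minimum satellite bridge for $M$. Then $\overline{SB}$ is a satellite bridge for $M$ and $|N(\overline{SB})|\le \big(3\rho H(\Delta+1)+\rho\big)\,|N(SB^\ast)|$, where $\Delta$ is the maximum degree of $G$, $H(n)=\sum_{k=1}^n 1/k$ is the harmonic number, and $\rho$ is the approximation ratio of the Steiner tree procedure used in Algorithm 1.
   Context: Let $G=(V,E)$ be a finite, simple, undirected, connected graph with $|V|\ge 2$ and maximum degree $\Delta$. Fix a positive integer $K$ and, for every $u\in V$, a nonempty set $\Gamma(u)\subseteq\{1,\dots,K\}$. Let $nb_G(u)$ be the neighbours of $u$ in $G$. For a tree $T$, $N(T)$ and $E(T)$ are its vertex and edge sets. The extended graph $\widetilde G=(\widetilde V,\widetilde E)$ of $G$: (i) initially $\widetilde V=V$, $\widetilde E=\emptyset$; (ii) for each $u\in V$ and each $i\in\bigcup_{v\in nb_G(u)}\Gamma(v)$, add a new vertex $\lambda(u,i)$ (satellite node of $u$; $u$ is its nuclear node); $\Psi(u)$ is the set of satellite nodes of $u$; (iii) for each $u\in V$, join every pair of distinct vertices of $\Psi(u)\cup\{u\}$; (iv) for each edge $\{u,v\}\in E$ (in each orientation $(u,v)$), each $i\in\Gamma(v)$, $j\in\Gamma(u)$, add edges $\{\lambda(u,i),\lambda(v,j)\}$, $\{\lambda(u,i),v\}$, $\{u,\lambda(v,j)\}$. $V_S=\widetilde V\setminus V$ is the set of satellite nodes, $\widetilde G_s$ the subgraph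 of $\widetilde G$ induced by $V_S$, and $nb_{\widetilde G}(x)$ the neighbourhood of $x$ in $\widetilde G$. Given $M\subseteq V$, a satellite bridge is a (nonempty) subtree $SB$ of $\widetilde G$ all of whose vertices are satellite nodes and such that every vertex of $M$ is adjacent in $\widetilde G$ to at least one vertex of $SB$. A minimum satellite bridge is one with the minimum number of vertices. Algorithm 1 (input $\widetilde G$, $M$): set $C=\emptyset$, $UC=M$. While $UC\neq\emptyset$: pick $v\in V_S\setminus C$ maximizing $|nb_{\widetilde G}(v)\cap UC|$ (ties broken arbitrarily), set $C=C\cup\{v\}$ and $UC=UC\setminus nb_{\widetilde G}(v)$. Then compute a tree $ST$ in $\widetilde G_s$ with $C\subseteq N(ST)$ and $|E(ST)|\le\rho\cdot\min\{|E(T')|: T'$ a tree in $\widetilde G_s$ with $C\subseteq N(T')\}$, using a fixed $\rho$-approximation algorithm ($\rho\ge 1$) for the unit-weight Steiner tree problem. Output $\overline{SB}=ST$. *)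

theory Defs
  imports "HOL-Analysis.Analysis"
begin

text \<open>Vertices of the extended graph: nuclear nodes (copies of V) and satellite nodes lambda(u,i).\<close>
datatype 'a xv = Nuc 'a | Sat 'a nat

definition simple_graph :: "'a set \<Rightarrow> ('a \<Rightarrow> 'a \<Rightarrow> bool) \<Rightarrow> bool" where
  "simple_graph V E \<longleftrightarrow> finite V \<and> (\<forall>u v. E u v \<longrightarrow> u \<in> V \<and> v \<in> V \<and> u \<noteq> v \<and> E v u)"

definition connected_graph :: "'a set \<Rightarrow> ('a \<Rightarrow> 'a \<Rightarrow> bool) \<Rightarrow> bool" where
  "connected_graph V E \<longleftrightarrow> (\<forall>u\<in>V. \<forall>v\<in>V. E\<^sup>*\<^sup>* u v)"

definition nbG :: "'a set \<Rightarrow> ('a \<Rightarrow> 'a \<Rightarrow> bool) \<Rightarrow> 'a \<Rightarrow> 'a set" where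
  "nbG V E u = {v \<in> V. E u v}"

definition max_degree :: "'a set \<Rightarrow> ('a \<Rightarrow> 'a \<Rightarrow> bool) \<Rightarrow> nat" where
  "max_degree V E = Max ((\<lambda>u. card (nbG V E u)) ` V)"

definition sat_idx :: "'a set \<Rightarrow> ('a \<Rightarrow> 'a \<Rightarrow> bool) \<Rightarrow> ('a \<Rightarrow> nat set) \<Rightarrow> 'a \<Rightarrow> nat set" where
  "sat_idx V E \<Gamma> u = (\<Union>v\<in>nbG V E u. \<Gamma> v)"

definition Psi :: "'a set \<Rightarrow> ('a \<Rightarrow> 'a \<Rightarrow> bool) \<Rightarrow> ('a \<Rightarrow> nat set) \<Rightarrow> 'a \<Rightarrow> 'a xv set" where
  "Psi V E \<Gamma> u = {Sat u i | i. i \<in> sat_idx V E \<Gamma> u}"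

definition sat_nodes :: "'a set \<Rightarrow> ('a \<Rightarrow> 'a \<Rightarrow> bool) \<Rightarrow> ('a \<Rightarrow> nat set) \<Rightarrow> 'a xv set" where
  "sat_nodes V E \<Gamma> = (\<Union>u\<in>V. Psi V E \<Gamma> u)"

text \<open>Adjacency of the extended graph, steps (iii) and (iv).\<close>
definition ext_edge :: "'a set \<Rightarrow> ('a \<Rightarrow> 'a \<Rightarrow> bool) \<Rightarrow> ('a \<Rightarrow> nat set) \<Rightarrow> 'a xv \<Rightarrow> 'a xv \<Rightarrow> bool" where
  "ext_edge V E \<Gamma> x y \<longleftrightarrow> x \<noteq> y \<and>
     ((\<exists>u\<in>V. x \<in> insert (Nuc u) (Psi V E \<Gamma> u) \<and> y \<in> insert (Nuc u) (Psi V E \<Gamma> u)) \<or>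
      (\<exists>u v i j. E u v \<and> i \<in> \<Gamma> v \<and> j \<in> \<Gamma> u \<and>
         ({x, y} = {Sat u i, Sat v j} \<or> {x, y} = {Sat u i, Nuc v} \<or> {x, y} = {Nuc u, Sat v j})))"

definition nbX :: "'a set \<Rightarrow> ('a \<Rightarrow> 'a \<Rightarrow> bool) \<Rightarrow> ('a \<Rightarrow> nat set) \<Rightarrow> 'a xv \<Rightarrow> 'a xv set" where
  "nbX V E \<Gamma> x = {y. ext_edge V E \<Gamma> x y}"

definition is_tree :: "('v \<Rightarrow> 'v \<Rightarrow> bool) \<Rightarrow> 'v set \<Rightarrow> 'v set set \<Rightarrow> bool" where
  "is_tree Adj N F \<longleftrightarrow> finite N \<and> N \<noteq> {} \<and>
     F \<subseteq> {{x, y} | x y. x \<in> N \<and> y \<in> N \<and> Adj x y} \<and>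
     (\<forall>x\<in>N. \<forall>y\<in>N. (\<lambda>a b. {a, b} \<in> F)\<^sup>*\<^sup>* x y) \<and>
     card F = card N - 1"

definition sat_tree :: "'a set \<Rightarrow> ('a \<Rightarrow> 'a \<Rightarrow> bool) \<Rightarrow> ('a \<Rightarrow> nat set) \<Rightarrow> 'a xv set \<Rightarrow> 'a xv set set \<Rightarrow> bool" where
  "sat_tree V E \<Gamma> N F \<longleftrightarrow> N \<subseteq> sat_nodes V E \<Gamma> \<and>
     is_tree (\<lambda>x y. ext_edge V E \<Gamma> x y \<and> x \<in> sat_nodes V E \<Gamma> \<and> y \<in> sat_nodes V E \<Gamma>) N F"

definition satellite_bridge :: "'a set \<Rightarrow> ('a \<Rightarrow> 'a \<Rightarrow> bool) \<Rightarrow> ('a \<Rightarrow> nat set) \<Rightarrow> 'a set \<Rightarrow> 'a xv set \<Rightarrow> 'a xv set set \<Rightarrow> bool" where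
  "satellite_bridge V E \<Gamma> M N F \<longleftrightarrow>
     N \<subseteq> sat_nodes V E \<Gamma> \<and> is_tree (ext_edge V E \<Gamma>) N F \<and>
     (\<forall>m\<in>M. \<exists>x\<in>N. ext_edge V E \<Gamma> (Nuc m) x)"

definition min_satellite_bridge :: "'a set \<Rightarrow> ('a \<Rightarrow> 'a \<Rightarrow> bool) \<Rightarrow> ('a \<Rightarrow> nat set) \<Rightarrow> 'a set \<Rightarrow> 'a xv set \<Rightarrow> 'a xv set set \<Rightarrow> bool" where
  "min_satellite_bridge V E \<Gamma> M N F \<longleftrightarrow> satellite_bridge V E \<Gamma> M N F \<and>
     (\<forall>N' F'. satellite_bridge V E \<Gamma> M N' F' \<longrightarrow> card N \<le> card N')"

definition uncovered :: "'a set \<Rightarrow> ('a \<Rightarrow> 'a \<Rightarrow> bool) \<Rightarrow> ('a \<Rightarrow> nat set) \<Rightarrow> 'a set \<Rightarrow> 'a xv list \<Rightarrow> nat \<Rightarrow> 'a xv set" where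
  "uncovered V E \<Gamma> M cs k = Nuc ` M - (\<Union>c\<in>set (take k cs). nbX V E \<Gamma> c)"

text \<open>cs is the sequence of nodes chosen by a (terminating) run of the greedy loop of
  Algorithm 1, with arbitrary tie-breaking; C = set cs.\<close>
definition greedy_run :: "'a set \<Rightarrow> ('a \<Rightarrow> 'a \<Rightarrow> bool) \<Rightarrow> ('a \<Rightarrow> nat set) \<Rightarrow> 'a set \<Rightarrow> 'a xv list \<Rightarrow> bool" where
  "greedy_run V E \<Gamma> M cs \<longleftrightarrow>
     (\<forall>k < length cs.
        uncovered V E \<Gamma> M cs k \<noteq> {} \<and>
        cs ! k \<in> sat_nodes V E \<Gamma> - set (take k cs) \<and>
        (\<forall>v \<in> sat_nodes V E \<Gamma> - set (take k cs).
           card (nbX V E \<Gamma> v \<inter> uncovered V E \<Gamma> M cs k)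
             \<le> card (nbX V E \<Gamma> (cs ! k) \<inter> uncovered V E \<Gamma> M cs k))) \<and>
     uncovered V E \<Gamma> M cs (length cs) = {}"

definition steiner_approx :: "'a set \<Rightarrow> ('a \<Rightarrow> 'a \<Rightarrow> bool) \<Rightarrow> ('a \<Rightarrow> nat set) \<Rightarrow> real \<Rightarrow> 'a xv set \<Rightarrow> 'a xv set \<Rightarrow> 'a xv set set \<Rightarrow> bool" where
  "steiner_approx V E \<Gamma> \<rho> C N F \<longleftrightarrow> sat_tree V E \<Gamma> N F \<and> C \<subseteq> N \<and>
     (\<forall>N' F'. sat_tree V E \<Gamma> N' F' \<and> C \<subseteq> N' \<longrightarrow> real (card F) \<le> \<rho> * real (card F'))"

end

theory Submission
  imports Defs
begin

lemma tree_extend: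
  assumes T: "is_tree Adj N F" and x: "x \<in> N" and y: "y \<notin> N" and a: "Adj x y"
  shows "is_tree Adj (insert y N) (insert {x,y} F)"
proof -
  have fN: "finite N" and Fs: "F \<subseteq> {{x, y} | x y. x \<in> N \<and> y \<in> N \<and> Adj x y}"
   and con: "\<forall>a\<in>N. \<forall>b\<in>N. (\<lambda>a b. {a, b} \<in> F)\<^sup>*\<^sup>* a b" and cF: "card F = card N - 1"
   and ne: "N \<noteq> {}"
    using T unfolding is_tree_def by auto
  have fF: "finite F"
  proof -
    have "{{x, y} | x y. x \<in> N \<and> y \<in> N \<and> Adj x y} \<subseteq> (\<lambda>(a,b). {a,b}) ` (N \<times> N)" by auto
    then show ?thesis using Fs fN by (meson finite_SigmaI finite_imageI finite_subset)
  qed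
  have nin: "{x,y} \<notin> F"
  proof
    assume "{x,y} \<in> F"
    then obtain p q where "{x,y} = {p,q}" "p \<in> N" "q \<in> N" using Fs by blast
    then show False using y by (auto simp: doubleton_eq_iff)
  qed
  let ?R = "\<lambda>a b. {a, b} \<in> insert {x,y} F"
  have mono: "(\<lambda>a b. {a, b} \<in> F)\<^sup>*\<^sup>* a b \<Longrightarrow> ?R\<^sup>*\<^sup>* a b" for a b
    by (rule rtranclp_mono[THEN predicate2D, rotated]) auto
  have xy: "?R x y" "?R y x" by (auto simp: insert_commute)
  have conn: "\<forall>a\<in>insert y N. \<forall>b\<in>insert y N. ?R\<^sup>*\<^sup>* a b"
  proof (intro ballI)
    fix a b assume A: "a \<in> insert y N" "b \<in> insert y N"
    have ax: "?R\<^sup>*\<^sup>* a x"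
      using A(1) xy con x mono by (auto intro: r_into_rtranclp)
    have xb: "?R\<^sup>*\<^sup>* x b"
      using A(2) xy con x mono by (auto intro: r_into_rtranclp)
    show "?R\<^sup>*\<^sup>* a b" using ax xb by (rule rtranclp_trans)
  qed
  have sub: "insert {x,y} F \<subseteq> {{a, b} | a b. a \<in> insert y N \<and> b \<in> insert y N \<and> Adj a b}"
  proof
    fix e assume "e \<in> insert {x,y} F"
    then show "e \<in> {{a, b} | a b. a \<in> insert y N \<and> b \<in> insert y N \<and> Adj a b}"
    proof
      assume "e = {x,y}" then show ?thesis using x a by blast
    next
      assume "e \<in> F" then obtain p q where "e = {p,q}" "p \<in> N" "q \<in> N" "Adj p q" using Fs by blast
      then show ?thesis by blast
    qed
  qed
  have c1: "card N \<ge> 1" using ne fN by (simp add: Suc_leI card_gt_0_iff)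
  have "card (insert {x,y} F) = card (insert y N) - 1"
    using nin fF fN y cF c1 by simp
  then show ?thesis unfolding is_tree_def
    using fN sub conn by simp
qed

lemma exit_edge:
  assumes "r\<^sup>*\<^sup>* a b" "a \<in> S" "b \<notin> S"
  shows "\<exists>p q. r p q \<and> p \<in> S \<and> q \<notin> S"
  using assms by (induction rule: rtranclp.induct) auto

lemma span_tree:
  assumes "finite W" "is_tree Adj N F" "N \<subseteq> W"
    "\<forall>y\<in>W. \<exists>x\<in>N. (\<lambda>a b. Adj a b \<and> a \<in> W \<and> b \<in> W)\<^sup>*\<^sup>* x y"
  shows "\<exists>F'. is_tree Adj W F'"
  using assms
proof (induction "card (W - N)" arbitrary: N F rule: less_induct)
  case less
  show ?case
  proof (cases "N = W")
    case True then show ?thesis using less by blast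
  next
    case False
    then obtain y where y: "y \<in> W" "y \<notin> N" using less by blast
    then obtain x where x: "x \<in> N" "(\<lambda>a b. Adj a b \<and> a \<in> W \<and> b \<in> W)\<^sup>*\<^sup>* x y" using less by blast
    then obtain p q where pq: "Adj p q" "p \<in> N" "q \<notin> N" "q \<in> W"
      using exit_edge[OF x(2) x(1) y(2)] by blast
    have T': "is_tree Adj (insert q N) (insert {p,q} F)"
      using tree_extend[OF less(3) pq(2) pq(3) pq(1)] .
    have "card (W - insert q N) < card (W - N)"
      using pq less(2) by (metis Diff_insert card_Diff1_less finite_Diff insertI1 insert_Diff_single Diff_iff)
    then show ?thesis using less(1)[OF _ less(2) T'] less(4,5) pq by blast
  qed
qed


lemma ext_sym1: "ext_edge V E \<Gamma> x y \<Longrightarrow> ext_edge V E \<Gamma> y x"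
proof -
  assume a: "ext_edge V E \<Gamma> x y"
  have "{y,x} = {x,y}" by blast
  then show ?thesis using a unfolding ext_edge_def by metis
qed

lemma ext_sym: "ext_edge V E \<Gamma> x y = ext_edge V E \<Gamma> y x"
  using ext_sym1 by metis

lemma sat_mem: "Sat w j \<in> sat_nodes V E \<Gamma> \<longleftrightarrow> w \<in> V \<and> j \<in> sat_idx V E \<Gamma> w"
  unfolding sat_nodes_def Psi_def by auto

lemma nuc_not_sat: "Nuc m \<notin> sat_nodes V E \<Gamma>"
  unfolding sat_nodes_def Psi_def by auto

lemma sat_form: "c \<in> sat_nodes V E \<Gamma> \<Longrightarrow> \<exists>u i. c = Sat u i"
  unfolding sat_nodes_def Psi_def by auto

lemma Psi_sub: "u \<in> V \<Longrightarrow> Psi V E \<Gamma> u \<subseteq> sat_nodes V E \<Gamma>"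
  unfolding sat_nodes_def by auto

lemma Psi_mem: "Sat w j \<in> Psi V E \<Gamma> u \<longleftrightarrow> w = u \<and> j \<in> sat_idx V E \<Gamma> u"
  unfolding Psi_def by auto

lemma sat_of_edge:
  assumes "simple_graph V E" "E u v" "i \<in> \<Gamma> v"
  shows "Sat u i \<in> sat_nodes V E \<Gamma>"
  using assms unfolding simple_graph_def sat_mem sat_idx_def nbG_def by blast

lemma nuc_adj:
  assumes sg: "simple_graph V E" and "ext_edge V E \<Gamma> (Nuc m) (Sat w j)"
  shows "(w = m \<and> m \<in> V) \<or> (E w m \<and> j \<in> \<Gamma> m)"
proof -
  have D: "(\<exists>u\<in>V. Nuc m \<in> insert (Nuc u) (Psi V E \<Gamma> u) \<and> Sat w j \<in> insert (Nuc u) (Psi V E \<Gamma> u)) \<or>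
      (\<exists>u v i j'. E u v \<and> i \<in> \<Gamma> v \<and> j' \<in> \<Gamma> u \<and>
         ({Nuc m, Sat w j} = {Sat u i, Sat v j'} \<or> {Nuc m, Sat w j} = {Sat u i, Nuc v} \<or> {Nuc m, Sat w j} = {Nuc u, Sat v j'}))"
    using assms unfolding ext_edge_def by blast
  then show ?thesis
  proof
    assume "\<exists>u\<in>V. Nuc m \<in> insert (Nuc u) (Psi V E \<Gamma> u) \<and> Sat w j \<in> insert (Nuc u) (Psi V E \<Gamma> u)"
    then obtain u where u: "u \<in> V" "Nuc m \<in> insert (Nuc u) (Psi V E \<Gamma> u)" "Sat w j \<in> insert (Nuc u) (Psi V E \<Gamma> u)" by blast
    have "Nuc m \<notin> Psi V E \<Gamma> u" unfolding Psi_def by blast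
    then have "m = u" using u(2) by blast
    moreover have "w = u" using u(3) Psi_mem[of w j V E \<Gamma> u] by blast
    ultimately show ?thesis using u(1) by blast
  next
    assume "\<exists>u v i j'. E u v \<and> i \<in> \<Gamma> v \<and> j' \<in> \<Gamma> u \<and>
         ({Nuc m, Sat w j} = {Sat u i, Sat v j'} \<or> {Nuc m, Sat w j} = {Sat u i, Nuc v} \<or> {Nuc m, Sat w j} = {Nuc u, Sat v j'})"
    then obtain u v i j' where hh: "E u v \<and> i \<in> \<Gamma> v \<and> j' \<in> \<Gamma> u \<and>
       ({Nuc m, Sat w j} = {Sat u i, Sat v j'} \<or> {Nuc m, Sat w j} = {Sat u i, Nuc v} \<or> {Nuc m, Sat w j} = {Nuc u, Sat v j'})"
      by (elim exE) (rule that)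
    have h: "E u v" "i \<in> \<Gamma> v" "j' \<in> \<Gamma> u"
       "{Nuc m, Sat w j} = {Sat u i, Sat v j'} \<or> {Nuc m, Sat w j} = {Sat u i, Nuc v} \<or> {Nuc m, Sat w j} = {Nuc u, Sat v j'}"
      using hh by (rule conjunct1 conjunct2[THEN conjunct1] conjunct2[THEN conjunct2, THEN conjunct1] conjunct2[THEN conjunct2, THEN conjunct2])+
    from h(4) show ?thesis
    proof (elim disjE)
      assume eq: "{Nuc m, Sat w j} = {Sat u i, Sat v j'}" show ?thesis using doubleton_eq_iff[THEN iffD1, OF eq] by simp
    next
      assume eq: "{Nuc m, Sat w j} = {Sat u i, Nuc v}" have "v = m \<and> u = w \<and> i = j" using doubleton_eq_iff[THEN iffD1, OF eq] by simp
      then show ?thesis using h(1,2) by auto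
    next
      assume eq: "{Nuc m, Sat w j} = {Nuc u, Sat v j'}" have "u = m \<and> v = w \<and> j' = j" using doubleton_eq_iff[THEN iffD1, OF eq] by simp
      moreover have "E w m" using h(1) sg \<open>u = m \<and> v = w \<and> j' = j\<close> unfolding simple_graph_def by blast
      ultimately show ?thesis using h(3) by auto
    qed
  qed
qed

lemma ss_adj:
  assumes "simple_graph V E" "E u v" "i \<in> \<Gamma> v" "k \<in> \<Gamma> u"
  shows "ext_edge V E \<Gamma> (Sat u i) (Sat v k)"
proof -
  have "u \<noteq> v" using assms unfolding simple_graph_def by blast
  moreover have "\<exists>u' v' i' j'. E u' v' \<and> i' \<in> \<Gamma> v' \<and> j' \<in> \<Gamma> u' \<and>
     ({Sat u i, Sat v k} = {Sat u' i', Sat v' j'} \<or> {Sat u i, Sat v k} = {Sat u' i', Nuc v'} \<or> {Sat u i, Sat v k} = {Nuc u', Sat v' j'})"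
    using assms by (intro exI[of _ u] exI[of _ v] exI[of _ i] exI[of _ k]) simp
  ultimately show ?thesis unfolding ext_edge_def by (intro conjI disjI2) simp_all
qed

lemma clique_adj:
  assumes "m \<in> V" "a \<in> Psi V E \<Gamma> m" "b \<in> Psi V E \<Gamma> m" "a \<noteq> b"
  shows "ext_edge V E \<Gamma> a b"
  unfolding ext_edge_def using assms by (intro conjI disjI1 bexI[of _ m]) auto

lemma idx_of_edge:
  assumes "simple_graph V E" "E u v" "i \<in> \<Gamma> v"
  shows "i \<in> sat_idx V E \<Gamma> u"
  using assms unfolding simple_graph_def sat_idx_def nbG_def by blast

lemma path3:
  assumes sg: "simple_graph V E" and gam: "\<And>u. u \<in> V \<Longrightarrow> \<Gamma> u \<noteq> {}"
    and c: "c \<in> sat_nodes V E \<Gamma>" and x: "x \<in> sat_nodes V E \<Gamma>"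
    and cm: "ext_edge V E \<Gamma> (Nuc m) c" and xm: "ext_edge V E \<Gamma> (Nuc m) x"
  shows "\<exists>a b. a \<in> sat_nodes V E \<Gamma> \<and> b \<in> sat_nodes V E \<Gamma> \<and>
     (x = b \<or> ext_edge V E \<Gamma> x b) \<and> (b = a \<or> ext_edge V E \<Gamma> b a) \<and> (a = c \<or> ext_edge V E \<Gamma> a c)"
proof -
  obtain u i where cu: "c = Sat u i" using sat_form[OF c] by blast
  obtain w j where xw: "x = Sat w j" using sat_form[OF x] by blast
  have uV: "u \<in> V" and iu: "i \<in> sat_idx V E \<Gamma> u" using c unfolding cu sat_mem by simp_all
  have wV: "w \<in> V" and jw: "j \<in> sat_idx V E \<Gamma> w" using x unfolding xw sat_mem by simp_all
  have E_sym: "E p q \<Longrightarrow> E q p" for p q using sg unfolding simple_graph_def by blast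
  have E_V: "E p q \<Longrightarrow> q \<in> V" for p q using sg unfolding simple_graph_def by blast
  have R: "p \<in> Psi V E \<Gamma> mm \<Longrightarrow> q \<in> Psi V E \<Gamma> mm \<Longrightarrow> mm \<in> V \<Longrightarrow> p = q \<or> ext_edge V E \<Gamma> p q" for p q mm
    using clique_adj[where m=mm and a=p and b=q] by blast
  have cases_c: "(u = m \<and> m \<in> V) \<or> (E u m \<and> i \<in> \<Gamma> m)" using nuc_adj[OF sg] cm unfolding cu .
  have cases_x: "(w = m \<and> m \<in> V) \<or> (E w m \<and> j \<in> \<Gamma> m)" using nuc_adj[OF sg] xm unfolding xw .
  obtain k where k: "k \<in> \<Gamma> u" using gam[OF uV] by blast
  obtain k' where k': "k' \<in> \<Gamma> w" using gam[OF wV] by blast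
  show ?thesis
  proof (cases "u = m \<and> m \<in> V")
    case cA: True
    show ?thesis
    proof (cases "w = m \<and> m \<in> V")
      case True
      have "x \<in> Psi V E \<Gamma> m" "c \<in> Psi V E \<Gamma> m" using True cA unfolding cu xw Psi_mem using iu jw by simp_all
      then have "x = c \<or> ext_edge V E \<Gamma> x c" using cA R by blast
      then show ?thesis using c by blast
    next
      case False
      then have ex: "E w m" "j \<in> \<Gamma> m" using cases_x by auto
      define b where "b = Sat m k'"
      have bS: "b \<in> sat_nodes V E \<Gamma>" unfolding b_def using sat_of_edge[where \<Gamma>=\<Gamma>, OF sg E_sym[OF ex(1)] k'] .
      have xb: "ext_edge V E \<Gamma> x b" unfolding b_def xw using ss_adj[where \<Gamma>=\<Gamma>, OF sg ex(1) ex(2) k'] .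
      have "b \<in> Psi V E \<Gamma> m" unfolding b_def Psi_mem using idx_of_edge[where \<Gamma>=\<Gamma>, OF sg E_sym[OF ex(1)] k'] by simp
      moreover have "c \<in> Psi V E \<Gamma> m" using cA iu unfolding cu Psi_mem by simp
      ultimately have "b = c \<or> ext_edge V E \<Gamma> b c" using R cA by blast
      then show ?thesis using bS xb by blast
    qed
  next
    case cB: False
    then have ec: "E u m" "i \<in> \<Gamma> m" using cases_c by auto
    define a where "a = Sat m k"
    have aS: "a \<in> sat_nodes V E \<Gamma>" unfolding a_def using sat_of_edge[where \<Gamma>=\<Gamma>, OF sg E_sym[OF ec(1)] k] .
    have ac: "ext_edge V E \<Gamma> a c" unfolding a_def cu using ss_adj[where \<Gamma>=\<Gamma>, OF sg E_sym[OF ec(1)] k ec(2)] .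
    have aP: "a \<in> Psi V E \<Gamma> m" unfolding a_def Psi_mem using idx_of_edge[where \<Gamma>=\<Gamma>, OF sg E_sym[OF ec(1)] k] by simp
    have mV: "m \<in> V" using E_V ec(1) .
    show ?thesis
    proof (cases "w = m \<and> m \<in> V")
      case True
      then have "x \<in> Psi V E \<Gamma> m" using jw unfolding xw Psi_mem by simp
      then have "x = a \<or> ext_edge V E \<Gamma> x a" using R aP mV by blast
      then show ?thesis using aS ac by blast
    next
      case False
      then have ex: "E w m" "j \<in> \<Gamma> m" using cases_x by auto
      define b where "b = Sat m k'"
      have bS: "b \<in> sat_nodes V E \<Gamma>" unfolding b_def using sat_of_edge[where \<Gamma>=\<Gamma>, OF sg E_sym[OF ex(1)] k'] .
      have xb: "ext_edge V E \<Gamma> x b" unfolding b_def xw using ss_adj[where \<Gamma>=\<Gamma>, OF sg ex(1) ex(2) k'] .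
      have "b \<in> Psi V E \<Gamma> m" unfolding b_def Psi_mem using idx_of_edge[where \<Gamma>=\<Gamma>, OF sg E_sym[OF ex(1)] k'] by simp
      then have "b = a \<or> ext_edge V E \<Gamma> b a" using R aP mV by blast
      then show ?thesis using aS bS xb ac by blast
    qed
  qed
qed

lemma nb_card:
  assumes sg: "simple_graph V E" and x: "x \<in> sat_nodes V E \<Gamma>"
  shows "card (nbX V E \<Gamma> x \<inter> Nuc ` M) \<le> max_degree V E + 1"
proof -
  obtain w j where xw: "x = Sat w j" using sat_form[OF x] by blast
  have wV: "w \<in> V" using x unfolding xw sat_mem by simp
  have fV: "finite V" using sg simple_graph_def by blast
  have sub: "nbX V E \<Gamma> x \<inter> Nuc ` M \<subseteq> Nuc ` insert w (nbG V E w)"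
  proof
    fix e assume e: "e \<in> nbX V E \<Gamma> x \<inter> Nuc ` M"
    then obtain m where em: "e = Nuc m" by blast
    have "ext_edge V E \<Gamma> (Nuc m) (Sat w j)" using e em xw ext_sym unfolding nbX_def by fastforce
    then have "(w = m \<and> m \<in> V) \<or> (E w m \<and> j \<in> \<Gamma> m)" by (rule nuc_adj[OF sg])
    then have "m \<in> insert w (nbG V E w)" using sg unfolding nbG_def simple_graph_def by blast
    then show "e \<in> Nuc ` insert w (nbG V E w)" using em by blast
  qed
  have fn: "finite (nbG V E w)" using fV unfolding nbG_def by simp
  have "card (nbX V E \<Gamma> x \<inter> Nuc ` M) \<le> card (Nuc ` insert w (nbG V E w))"
    using sub fn by (simp add: card_mono)
  also have "\<dots> \<le> card (insert w (nbG V E w))" by (rule card_image_le) (simp add: fn)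
  also have "\<dots> \<le> card (nbG V E w) + 1" by (simp add: card_insert_if fn)
  also have "card (nbG V E w) \<le> max_degree V E"
    unfolding max_degree_def using fV wV by (auto intro: Max_ge)
  finally show ?thesis by simp
qed

lemma finite_sat: "simple_graph V E \<Longrightarrow> (\<And>u. u \<in> V \<Longrightarrow> \<Gamma> u \<subseteq> {1..K}) \<Longrightarrow> finite (sat_nodes V E \<Gamma>)"
proof -
  assume sg: "simple_graph V E" and g: "\<And>u. u \<in> V \<Longrightarrow> \<Gamma> u \<subseteq> {1..K}"
  have "sat_nodes V E \<Gamma> \<subseteq> (\<lambda>(u,i). Sat u i) ` (V \<times> {1..K})"
  proof
    fix c assume c: "c \<in> sat_nodes V E \<Gamma>"
    then obtain u i where cu: "c = Sat u i" using sat_form by blast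
    then have "u \<in> V" "i \<in> sat_idx V E \<Gamma> u" using c unfolding cu sat_mem by simp_all
    then have "i \<in> {1..K}" using g sg unfolding sat_idx_def nbG_def by blast
    then show "c \<in> (\<lambda>(u,i). Sat u i) ` (V \<times> {1..K})" using cu \<open>u \<in> V\<close> by blast
  qed
  moreover have "finite V" using sg simple_graph_def by blast
  ultimately show ?thesis by (meson finite_SigmaI finite_atLeastAtMost finite_imageI finite_subset)
qed


lemma harm_diff_aux: "real d / real (b + d) \<le> harm (b + d) - (harm b :: real)"
proof (induction d)
  case 0 then show ?case by simp
next
  case (Suc d)
  have "real d / real (b + Suc d) \<le> real d / real (b + d)"
  proof (cases "b + d = 0")
    case True then show ?thesis by simp
  next
    case False then show ?thesis by (intro divide_left_mono) auto
  qed
  moreover have "real (Suc d) / real (b + Suc d) = real d / real (b + Suc d) + inverse (real (Suc (b + d)))"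
    by (simp only: of_nat_Suc add_divide_distrib inverse_eq_divide add_Suc_right)
  ultimately have "real (Suc d) / real (b + Suc d) \<le> real d / real (b + d) + inverse (real (Suc (b + d)))"
    by linarith
  also have "\<dots> \<le> harm (b + d) - harm b + inverse (real (Suc (b + d)))" using Suc by simp
  also have "\<dots> = harm (b + Suc d) - harm b" by (simp add: harm_Suc)
  finally show ?case .
qed

lemma harm_diff: "b \<le> a \<Longrightarrow> real (a - b) / real a \<le> harm a - (harm b :: real)"
  using harm_diff_aux[of "a - b" b] by simp

lemma greedy_bound:
  assumes sg: "simple_graph V E" and fSN: "finite (sat_nodes V E \<Gamma>)" and MV: "M \<subseteq> V"
    and gr: "greedy_run V E \<Gamma> M cs"
    and cov: "\<forall>m\<in>M. \<exists>x\<in>Nopt. ext_edge V E \<Gamma> (Nuc m) x"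
    and NS: "Nopt \<subseteq> sat_nodes V E \<Gamma>" and fN: "finite Nopt"
  shows "real (length cs) \<le> harm (max_degree V E + 1) * real (card Nopt)"
proof -
  define UC where "UC = uncovered V E \<Gamma> M cs"
  define L where "L = length cs"
  define g where "g = (\<lambda>k. card (nbX V E \<Gamma> (cs ! k) \<inter> UC k))"
  define S where "S = (\<lambda>x. nbX V E \<Gamma> x \<inter> Nuc ` M)"
  define s where "s = (\<lambda>x k. card (S x \<inter> UC k))"
  define D where "D = (\<lambda>k. UC k - UC (Suc k))"
  have fV: "finite V" using sg simple_graph_def by blast
  have fM: "finite M" using fV MV finite_subset by blast
  have fNM: "finite (Nuc ` M)" using fM by simp
  have UCsub: "UC k \<subseteq> Nuc ` M" for k unfolding UC_def uncovered_def by blast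
  have fUC: "finite (UC k)" for k using UCsub fNM finite_subset by blast
  have UCSuc: "UC (Suc k) = UC k - nbX V E \<Gamma> (cs ! k)" if "k < L" for k
    using that unfolding UC_def uncovered_def L_def by (auto simp: take_Suc_conv_app_nth)
  have grk: "UC k \<noteq> {} \<and> cs ! k \<in> sat_nodes V E \<Gamma> - set (take k cs) \<and>
        (\<forall>v \<in> sat_nodes V E \<Gamma> - set (take k cs). card (nbX V E \<Gamma> v \<inter> UC k) \<le> g k)"
    if "k < L" for k using gr that unfolding greedy_run_def UC_def L_def g_def by blast
  have cov': "\<exists>x\<in>Nopt. e \<in> nbX V E \<Gamma> x" if eM: "e \<in> Nuc ` M" for e
  proof -
    obtain m where m: "m \<in> M" "e = Nuc m" using eM by blast
    then obtain x where "x \<in> Nopt" "ext_edge V E \<Gamma> (Nuc m) x" using cov by blast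
    then show ?thesis unfolding nbX_def using m ext_sym by blast
  qed
  have taken: "nbX V E \<Gamma> x \<inter> UC k = {}" if "x \<in> set (take k cs)" for x k
    using that unfolding UC_def uncovered_def by blast
  have SUC: "S x \<inter> UC k = nbX V E \<Gamma> x \<inter> UC k" for x k using UCsub unfolding S_def by blast
  have G6: "s x k \<le> g k" if "k < L" "x \<in> Nopt" for x k
  proof (cases "x \<in> set (take k cs)")
    case True then show ?thesis unfolding s_def SUC using taken by simp
  next
    case False then show ?thesis unfolding s_def SUC using grk[OF that(1)] that(2) NS by blast
  qed
  have G7: "g k > 0" if kL: "k < L" for k
  proof -
    obtain e where e: "e \<in> UC k" using grk[OF kL] by blast
    then obtain x where x: "x \<in> Nopt" "e \<in> nbX V E \<Gamma> x" using cov' UCsub by blast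
    have "e \<in> S x \<inter> UC k" using e x UCsub unfolding S_def by blast
    then have "s x k > 0" unfolding s_def using fUC by (metis card_gt_0_iff empty_iff finite_Int)
    then show ?thesis using G6[OF kL x(1)] by linarith
  qed
  have Dg: "card (D k) = g k" if "k < L" for k
  proof -
    have "D k = nbX V E \<Gamma> (cs ! k) \<inter> UC k" unfolding D_def using UCSuc[OF that] by blast
    then show ?thesis unfolding g_def by simp
  qed
  have DC: "card (D k) \<le> (\<Sum>x\<in>Nopt. card (D k \<inter> S x))" if "k < L" for k
  proof -
    have "D k \<subseteq> (\<Union>x\<in>Nopt. D k \<inter> S x)"
    proof
      fix e assume e: "e \<in> D k"
      then have "e \<in> Nuc ` M" using UCsub unfolding D_def by blast
      then obtain x where "x \<in> Nopt" "e \<in> nbX V E \<Gamma> x" using cov' by blast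
      then show "e \<in> (\<Union>x\<in>Nopt. D k \<inter> S x)" using e \<open>e \<in> Nuc ` M\<close> unfolding S_def by blast
    qed
    then have "card (D k) \<le> card (\<Union>x\<in>Nopt. D k \<inter> S x)"
      using fN fUC unfolding D_def by (intro card_mono) auto
    also have "\<dots> \<le> (\<Sum>x\<in>Nopt. card (D k \<inter> S x))" using fN by (rule card_UN_le)
    finally show ?thesis .
  qed
  have Dx: "card (D k \<inter> S x) = s x k - s x (Suc k)" if "k < L" for k x
  proof -
    have "D k \<inter> S x = (S x \<inter> UC k) - (S x \<inter> UC (Suc k))" unfolding D_def by blast
    moreover have "S x \<inter> UC (Suc k) \<subseteq> S x \<inter> UC k" using UCSuc[OF that] by blast
    ultimately show ?thesis unfolding s_def using fUC by (simp add: card_Diff_subset)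
  qed
  have sSuc: "s x (Suc k) \<le> s x k" if "k < L" for k x
    unfolding s_def using UCSuc[OF that] fUC by (intro card_mono) auto
  have perx: "real (card (D k \<inter> S x)) / real (g k) \<le> harm (s x k) - harm (s x (Suc k))"
    if "k < L" "x \<in> Nopt" for k x
  proof (cases "s x k = 0")
    case True
    then have "s x (Suc k) = 0" using sSuc[OF that(1), of x] by simp
    then show ?thesis using True Dx[OF that(1)] by simp
  next
    case False
    have "real (card (D k \<inter> S x)) / real (g k) \<le> real (s x k - s x (Suc k)) / real (s x k)"
      unfolding Dx[OF that(1)] using False G6[OF that] by (intro divide_left_mono) auto
    also have "\<dots> \<le> harm (s x k) - harm (s x (Suc k))" using sSuc[OF that(1), of x] by (rule harm_diff)
    finally show ?thesis .
  qed
  have step: "1 \<le> (\<Sum>x\<in>Nopt. real (card (D k \<inter> S x)) / real (g k))" if "k < L" for k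
  proof -
    have "real (g k) \<le> (\<Sum>x\<in>Nopt. real (card (D k \<inter> S x)))"
      using DC[OF that] Dg[OF that] by (metis of_nat_le_iff of_nat_sum)
    then have "1 \<le> (\<Sum>x\<in>Nopt. real (card (D k \<inter> S x))) / real (g k)"
      using G7[OF that] by (simp add: divide_simps)
    then show ?thesis by (simp add: sum_divide_distrib)
  qed
  have s0: "harm (s x 0) \<le> (harm (max_degree V E + 1) :: real)" if "x \<in> Nopt" for x
  proof -
    have "s x 0 \<le> card (S x)" unfolding s_def using fNM S_def by (intro card_mono) auto
    also have "\<dots> \<le> max_degree V E + 1" unfolding S_def using nb_card[OF sg] that NS by blast
    finally show ?thesis by (rule harm_mono)
  qed
  have "real L = (\<Sum>k<L. 1)" by simp
  also have "\<dots> \<le> (\<Sum>k<L. \<Sum>x\<in>Nopt. real (card (D k \<inter> S x)) / real (g k))"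
    using step by (intro sum_mono) auto
  also have "\<dots> = (\<Sum>x\<in>Nopt. \<Sum>k<L. real (card (D k \<inter> S x)) / real (g k))"
    by (rule sum.swap)
  also have "\<dots> \<le> (\<Sum>x\<in>Nopt. \<Sum>k<L. harm (s x k) - harm (s x (Suc k)))"
    using perx by (intro sum_mono) auto
  also have "\<dots> = (\<Sum>x\<in>Nopt. harm (s x 0) - harm (s x L))"
    by (intro sum.cong refl) (rule sum_lessThan_telescope')
  also have "\<dots> \<le> (\<Sum>x\<in>Nopt. harm (max_degree V E + 1))"
  proof (intro sum_mono)
    fix x assume "x \<in> Nopt"
    have "0 \<le> (harm (s x L) :: real)" by (rule harm_nonneg)
    then show "harm (s x 0) - harm (s x L) \<le> (harm (max_degree V E + 1) :: real)"
      using s0[OF \<open>x \<in> Nopt\<close>] by linarith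
  qed
  also have "\<dots> = harm (max_degree V E + 1) * real (card Nopt)" by simp
  finally show ?thesis unfolding L_def .
qed


lemma chosen_covers:
  assumes fM: "finite M" and gr: "greedy_run V E \<Gamma> M cs"
    and cov: "\<forall>m\<in>M. \<exists>x\<in>Nopt. ext_edge V E \<Gamma> (Nuc m) x"
    and NS: "Nopt \<subseteq> sat_nodes V E \<Gamma>" and c: "c \<in> set cs"
  shows "\<exists>m\<in>M. ext_edge V E \<Gamma> (Nuc m) c"
proof -
  obtain k where k: "k < length cs" "c = cs ! k" using c by (metis in_set_conv_nth)
  define U where "U = uncovered V E \<Gamma> M cs k"
  have Usub: "U \<subseteq> Nuc ` M" unfolding U_def uncovered_def by blast
  have fU: "finite U" using Usub fM finite_subset by blast
  have g: "U \<noteq> {}" "c \<in> sat_nodes V E \<Gamma> - set (take k cs)"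
     "\<forall>v \<in> sat_nodes V E \<Gamma> - set (take k cs). card (nbX V E \<Gamma> v \<inter> U) \<le> card (nbX V E \<Gamma> c \<inter> U)"
    using gr k unfolding greedy_run_def U_def by auto
  obtain e where e: "e \<in> U" using g(1) by blast
  then obtain m0 where m0: "m0 \<in> M" "e = Nuc m0" using Usub by blast
  then obtain x where x: "x \<in> Nopt" "ext_edge V E \<Gamma> (Nuc m0) x" using cov by blast
  have ex: "e \<in> nbX V E \<Gamma> x" unfolding nbX_def m0(2) using x(2) ext_sym by blast
  have "x \<notin> set (take k cs)" using e ex unfolding U_def uncovered_def by blast
  then have "card (nbX V E \<Gamma> x \<inter> U) \<le> card (nbX V E \<Gamma> c \<inter> U)" using g(3) x(1) NS by blast
  moreover have "card (nbX V E \<Gamma> x \<inter> U) > 0" using e ex fU by (metis card_gt_0_iff empty_iff finite_Int IntI)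
  ultimately have "nbX V E \<Gamma> c \<inter> U \<noteq> {}" by auto
  then obtain e' where e': "e' \<in> nbX V E \<Gamma> c" "e' \<in> U" by blast
  then obtain m where m: "m \<in> M" "e' = Nuc m" using Usub by blast
  have "ext_edge V E \<Gamma> (Nuc m) c" using e'(1) m(2) ext_sym unfolding nbX_def by blast
  then show ?thesis using m(1) by blast
qed

lemma card3: "card {a, b, c} \<le> 3"
  by (simp add: card_insert_if)

lemma tree_restrict:
  assumes "is_tree R N F" "N \<subseteq> S"
  shows "is_tree (\<lambda>x y. R x y \<and> x \<in> S \<and> y \<in> S) N F"
  using assms unfolding is_tree_def by blast

lemma tree_unrestrict:
  assumes "is_tree (\<lambda>x y. R x y \<and> x \<in> S \<and> y \<in> S) N F"
  shows "is_tree R N F"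
  using assms unfolding is_tree_def by blast


theorem theorem2:
  fixes V :: "'a set" and E :: "'a \<Rightarrow> 'a \<Rightarrow> bool" and K :: nat and \<Gamma> :: "'a \<Rightarrow> nat set"
    and M :: "'a set" and \<rho> :: real and cs :: "'a xv list"
    and N :: "'a xv set" and NF :: "'a xv set set" and Nopt :: "'a xv set" and Fopt :: "'a xv set set"
  assumes "simple_graph V E" and "connected_graph V E" and "card V \<ge> 2"
    and "K > 0" and "\<And>u. u \<in> V \<Longrightarrow> \<Gamma> u \<noteq> {} \<and> \<Gamma> u \<subseteq> {1..K}"
    and "M \<subseteq> V"
    and "\<rho> \<ge> 1"
    and "greedy_run V E \<Gamma> M cs"
    and "steiner_approx V E \<Gamma> \<rho> (set cs) N NF"
    and "min_satellite_bridge V E \<Gamma> M Nopt Fopt"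
  shows "satellite_bridge V E \<Gamma> M N NF \<and>
    real (card N) \<le> (3 * \<rho> * harm (max_degree V E + 1) + \<rho>) * real (card Nopt)"
proof -
  note sg = assms(1) and gam = assms(5) and MV = assms(6) and rho = assms(7)
    and gr = assms(8) and st = assms(9) and opt = assms(10)
  define SN where "SN = sat_nodes V E \<Gamma>"
  define Adj where "Adj = (\<lambda>x y. ext_edge V E \<Gamma> x y \<and> x \<in> SN \<and> y \<in> SN)"
  have fSN: "finite SN" unfolding SN_def using finite_sat[OF sg] gam by blast
  have fV: "finite V" using sg simple_graph_def by blast
  have fM: "finite M" using fV MV finite_subset by blast
  have stN: "is_tree Adj N NF" "N \<subseteq> SN" "set cs \<subseteq> N"
    and stB: "\<And>N' F'. is_tree Adj N' F' \<Longrightarrow> N' \<subseteq> SN \<Longrightarrow> set cs \<subseteq> N' \<Longrightarrow> real (card NF) \<le> \<rho> * real (card F')"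
    using st unfolding steiner_approx_def sat_tree_def Adj_def SN_def by blast+
  have ob: "Nopt \<subseteq> SN" "is_tree (ext_edge V E \<Gamma>) Nopt Fopt"
    "\<forall>m\<in>M. \<exists>x\<in>Nopt. ext_edge V E \<Gamma> (Nuc m) x"
    using opt unfolding min_satellite_bridge_def satellite_bridge_def SN_def by blast+
  have toptA: "is_tree Adj Nopt Fopt" unfolding Adj_def by (rule tree_restrict[OF ob(2) ob(1)])
  have covN: "\<forall>m\<in>M. \<exists>x\<in>N. ext_edge V E \<Gamma> (Nuc m) x"
  proof
    fix m assume m: "m \<in> M"
    have "uncovered V E \<Gamma> M cs (length cs) = {}" using gr unfolding greedy_run_def by blast
    then have "Nuc m \<in> (\<Union>c\<in>set (take (length cs) cs). nbX V E \<Gamma> c)"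
      using m unfolding uncovered_def by blast
    then obtain c where "c \<in> set cs" "Nuc m \<in> nbX V E \<Gamma> c" by auto
    then show "\<exists>x\<in>N. ext_edge V E \<Gamma> (Nuc m) x" using stN(3) ext_sym unfolding nbX_def by blast
  qed
  have SB: "satellite_bridge V E \<Gamma> M N NF"
    unfolding satellite_bridge_def using stN(2) covN tree_unrestrict[of "ext_edge V E \<Gamma>" SN N NF] stN(1)
    unfolding SN_def Adj_def by blast
  define Rq where "Rq = (\<lambda>p q. p = q \<or> ext_edge V E \<Gamma> p q)"
  have ex: "\<forall>c\<in>set cs. \<exists>x a b. x \<in> Nopt \<and> a \<in> SN \<and> b \<in> SN \<and> Rq x b \<and> Rq b a \<and> Rq a c"
  proof
    fix c assume c: "c \<in> set cs"
    obtain m where m: "m \<in> M" "ext_edge V E \<Gamma> (Nuc m) c"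
      using chosen_covers[OF fM gr ob(3) ob(1)[unfolded SN_def] c] by blast
    obtain x where x: "x \<in> Nopt" "ext_edge V E \<Gamma> (Nuc m) x" using ob(3) m(1) by blast
    have cS: "c \<in> SN" using c stN by blast
    have xS: "x \<in> SN" using x ob(1) by blast
    have gne: "\<And>u. u \<in> V \<Longrightarrow> \<Gamma> u \<noteq> {}" using gam by blast
    show "\<exists>x a b. x \<in> Nopt \<and> a \<in> SN \<and> b \<in> SN \<and> Rq x b \<and> Rq b a \<and> Rq a c"
      using path3[OF sg gne cS[unfolded SN_def] xS[unfolded SN_def] m(2) x(2)] x(1)
      unfolding Rq_def SN_def by blast
  qed
  then obtain X A B where XAB: "\<forall>c\<in>set cs. X c \<in> Nopt \<and> A c \<in> SN \<and> B c \<in> SN \<and> Rq (X c) (B c) \<and> Rq (B c) (A c) \<and> Rq (A c) c"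
    by metis
  define W where "W = Nopt \<union> (\<Union>c\<in>set cs. {c, A c, B c})"
  have WS: "W \<subseteq> SN" unfolding W_def using ob(1) stN XAB by blast
  have fW: "finite W" using WS fSN finite_subset by blast
  have csW: "set cs \<subseteq> W" unfolding W_def by blast
  define rW where "rW = (\<lambda>a b. Adj a b \<and> a \<in> W \<and> b \<in> W)"
  have stepW: "rW\<^sup>*\<^sup>* p q" if "p \<in> W" "q \<in> W" "Rq p q" for p q
  proof (cases "p = q")
    case True then show ?thesis by simp
  next
    case False
    then have "ext_edge V E \<Gamma> p q" using that(3) unfolding Rq_def by blast
    then have "rW p q" unfolding rW_def Adj_def using that WS by blast
    then show ?thesis by blast
  qed
  have reach: "\<forall>y\<in>W. \<exists>x\<in>Nopt. rW\<^sup>*\<^sup>* x y"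
  proof
    fix y assume y: "y \<in> W"
    show "\<exists>x\<in>Nopt. rW\<^sup>*\<^sup>* x y"
    proof (cases "y \<in> Nopt")
      case True then show ?thesis by blast
    next
      case False
      then obtain c where c: "c \<in> set cs" "y \<in> {c, A c, B c}" using y unfolding W_def by blast
      have inW: "X c \<in> W" "A c \<in> W" "B c \<in> W" "c \<in> W" using c(1) XAB unfolding W_def by blast+
      have h: "X c \<in> Nopt" "Rq (X c) (B c)" "Rq (B c) (A c)" "Rq (A c) c" using XAB c(1) by blast+
      have r1: "rW\<^sup>*\<^sup>* (X c) (B c)" using stepW inW h by blast
      have r2: "rW\<^sup>*\<^sup>* (X c) (A c)" using r1 stepW[OF inW(3) inW(2) h(3)] by (rule rtranclp_trans)
      have r3: "rW\<^sup>*\<^sup>* (X c) c" using r2 stepW[OF inW(2) inW(4) h(4)] by (rule rtranclp_trans)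
      show ?thesis using c(2) r1 r2 r3 h(1) by blast
    qed
  qed
  have NoW: "Nopt \<subseteq> W" unfolding W_def by blast
  obtain F' where F': "is_tree Adj W F'"
    using span_tree[OF fW toptA NoW] reach unfolding rW_def by blast
  have bnd: "real (card NF) \<le> \<rho> * real (card F')" using stB[OF F' WS csW] .
  have cF': "card F' = card W - 1" and Wne: "W \<noteq> {}" using F' unfolding is_tree_def by blast+
  have cNF: "card NF = card N - 1" and Nne: "N \<noteq> {}" and fN: "finite N"
    using stN(1) unfolding is_tree_def by blast+
  have cN: "card N = card NF + 1" using cNF Nne fN by (simp add: card_gt_0_iff)
  have W1: "card W \<ge> 1" using Wne fW by (simp add: Suc_leI card_gt_0_iff)
  have fNo: "finite Nopt" and Nopt_ne: "Nopt \<noteq> {}" using ob(2) unfolding is_tree_def by blast+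
  have cW: "card W \<le> card Nopt + 3 * length cs"
  proof -
    have "card W \<le> card Nopt + card (\<Union>c\<in>set cs. {c, A c, B c})" unfolding W_def by (rule card_Un_le)
    also have "card (\<Union>c\<in>set cs. {c, A c, B c}) \<le> (\<Sum>c\<in>set cs. card {c, A c, B c})" by (rule card_UN_le) simp
    also have "\<dots> \<le> (\<Sum>c\<in>set cs. 3)" by (rule sum_mono) (rule card3)
    also have "\<dots> = 3 * card (set cs)" by simp
    also have "\<dots> \<le> 3 * length cs" using card_length by simp
    finally show ?thesis by simp
  qed
  have gb: "real (length cs) \<le> harm (max_degree V E + 1) * real (card Nopt)"
    using greedy_bound[OF sg fSN[unfolded SN_def] MV gr ob(3) ob(1)[unfolded SN_def] fNo] .
  define H :: real where "H = harm (max_degree V E + 1)"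
  have rF': "real (card F') = real (card W) - 1" using cF' W1 by simp
  have rW': "real (card W) \<le> real (card Nopt) + 3 * real (length cs)" using cW by linarith
  have p1: "\<rho> * real (card F') \<le> \<rho> * (real (card Nopt) + 3 * real (length cs) - 1)"
    using rho rF' rW' by (intro mult_left_mono) auto
  have p2: "\<rho> * (3 * real (length cs)) \<le> \<rho> * (3 * (H * real (card Nopt)))"
    using rho gb unfolding H_def by (intro mult_left_mono) auto
  have "real (card N) = real (card NF) + 1" using cN by simp
  also have "\<dots> \<le> \<rho> * (real (card Nopt) + 3 * real (length cs) - 1) + 1" using bnd p1 by linarith
  also have "\<dots> \<le> \<rho> * real (card Nopt) + \<rho> * (3 * real (length cs))" using rho by (simp add: algebra_simps)
  also have "\<dots> \<le> \<rho> * real (card Nopt) + \<rho> * (3 * (H * real (card Nopt)))" using p2 by linarith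
  also have "\<dots> = (3 * \<rho> * H + \<rho>) * real (card Nopt)" by (simp add: algebra_simps)
  finally show ?thesis using SB unfolding H_def by blast
qed

end
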